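(* Let $\mathscr C\subset\mathbb R^m$ be compact, let $f:\mathscr C\to\mathbb R$ be continuous, and let $\epsilon>0$. Then there exist a positive integer $N$ and vectors $\bm u_{i,j}\in\mathbb R^{m+1}$ ($1\le j\le i\le N$) such that the polynomial $$p(\bm x)=\sum_{i=1}^N\prod_{j=1}^i\langle\check{\bm x},\bm u_{i,j}\rangle,\qquad \check{\bm x}=(\bm x,1)\in\mathbb R^{m+1},$$ satisfies $|f(\bm x)-p(\bm x)|<\epsilon$ for all $\bm x\in\mathscr C$. Moreover, if $p$ approximates $f$ within $\epsilon$ with total degree at most $k$, one may take $N=\sum_{i=0}^k\binom{m+i-1}{i}$.
   Context: $\langle\cdot,\cdot\rangle$ is the standard inner product on $\mathbb R^{m+1}$. *)

theory Defs
  imports "HOL-Analysis.Analysis"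
begin

definition xcheck :: "real^'m \<Rightarrow> real^('m + unit)" where
  "xcheck x = (\<chi> i. case i of Inl j \<Rightarrow> x $ j | Inr _ \<Rightarrow> 1)"

definition ridge_prod_poly :: "nat \<Rightarrow> (nat \<Rightarrow> nat \<Rightarrow> real^('m + unit)) \<Rightarrow> real^'m \<Rightarrow> real" where
  "ridge_prod_poly N u x = (\<Sum>i=1..N. \<Prod>j=1..i. xcheck x \<bullet> u i j)"

definition poly_total_deg_le :: "nat \<Rightarrow> (real^'m \<Rightarrow> real) \<Rightarrow> bool" where
  "poly_total_deg_le k p \<longleftrightarrow>
     (\<exists>c :: ('m \<Rightarrow> nat) \<Rightarrow> real.
        \<forall>x. p x = (\<Sum>\<alpha>\<in>{\<alpha>. (\<Sum>i\<in>UNIV. \<alpha> i) \<le> k}. c \<alpha> * (\<Prod>i\<in>UNIV. (x $ i) ^ \<alpha> i)))"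

end

theory Submission
  imports Defs
begin


definition prodform :: "nat \<Rightarrow> (real^'m \<Rightarrow> real) \<Rightarrow> bool" where
  "prodform d g \<longleftrightarrow> (\<exists>v. \<forall>x. g x = (\<Prod>j=1..d. xcheck x \<bullet> v j))"

lemma xcheck_axis_Inl: "xcheck x \<bullet> axis (Inl l) c = x $ l * c"
  by (simp add: inner_axis xcheck_def)
lemma xcheck_axis_Inr: "xcheck x \<bullet> axis (Inr u) c = c"
  by (simp add: inner_axis xcheck_def)

lemma prodform_0: "prodform 0 (\<lambda>x. 1)"
  by (simp add: prodform_def)

lemma prodform_times:
  assumes "prodform d g"
  shows "prodform (Suc d) (\<lambda>x. g x * (xcheck x \<bullet> w))"
proof -
  obtain v where v: "\<forall>x. g x = (\<Prod>j=1..d. xcheck x \<bullet> v j)" using assms prodform_def by blast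
  define v' where "v' = v(Suc d := w)"
  have "\<forall>x. g x * (xcheck x \<bullet> w) = (\<Prod>j=1..Suc d. xcheck x \<bullet> v' j)"
  proof
    fix x
    have "(\<Prod>j=1..d. xcheck x \<bullet> v' j) = (\<Prod>j=1..d. xcheck x \<bullet> v j)"
      by (rule prod.cong) (auto simp: v'_def)
    then show "g x * (xcheck x \<bullet> w) = (\<Prod>j=1..Suc d. xcheck x \<bullet> v' j)"
      using v by (simp add: prod.cl_ivl_Suc v'_def)
  qed
  then show ?thesis unfolding prodform_def by blast
qed

lemma prodform_lift: "prodform d g \<Longrightarrow> d \<le> i \<Longrightarrow> prodform i g"
proof (induction i)
  case 0 then show ?case by simp
next
  case (Suc i)
  show ?case
  proof (cases "d = Suc i")
    case True then show ?thesis using Suc by simp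
  next
    case False
    then have "prodform i g" using Suc by simp
    from prodform_times[OF this, of "axis (Inr ()) 1"] show ?thesis
      by (simp add: xcheck_axis_Inr)
  qed
qed

lemma prodform_scale: "prodform d g \<Longrightarrow> prodform (Suc d) (\<lambda>x. c * g x)"
  using prodform_times[of d g "axis (Inr ()) c"] by (simp add: xcheck_axis_Inr mult.commute)

lemma prodform_zero: "prodform (Suc d) (\<lambda>x. 0)"
proof -
  have "prodform d (\<lambda>x. 1)" using prodform_lift[OF prodform_0] by simp
  from prodform_times[OF this, of 0] show ?thesis by simp
qed

lemma prodform_pow: "prodform d g \<Longrightarrow> prodform (d + n) (\<lambda>x. g x * (x $ l) ^ n)"
proof (induction n)
  case 0 then show ?case by simp
next
  case (Suc n)
  from prodform_times[OF Suc.IH[OF Suc.prems], of "axis (Inl l) 1"] show ?case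
    by (simp add: xcheck_axis_Inl mult_ac)
qed

lemma prodform_mono_set:
  assumes "finite A"
  shows "prodform (\<Sum>i\<in>A. \<alpha> i) (\<lambda>x. \<Prod>i\<in>A. (x $ i) ^ \<alpha> i)"
  using assms
proof (induction A rule: finite_induct)
  case empty then show ?case using prodform_0 by simp
next
  case (insert a A)
  from prodform_pow[OF insert.IH, of "\<alpha> a" a] show ?case
    using insert.hyps by (simp add: mult_ac add_ac)
qed

lemma prodform_monomial:
  "prodform (Suc (\<Sum>i\<in>UNIV. \<alpha> i)) (\<lambda>x::real^'m. c * (\<Prod>i\<in>UNIV. (x $ i) ^ \<alpha> i))"
  by (rule prodform_scale[OF prodform_mono_set]) simp



lemma assign:
  fixes d :: "'a \<Rightarrow> nat"
  assumes "finite M" "\<forall>\<alpha>\<in>M. d \<alpha> \<le> card {\<beta>\<in>M. d \<beta> < d \<alpha>}"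
  shows "\<exists>g. inj_on g M \<and> g ` M \<subseteq> {1..card M} \<and> (\<forall>\<alpha>\<in>M. d \<alpha> < g \<alpha>)"
  using assms
proof (induction "card M" arbitrary: M)
  case 0
  then have "M = {}" by simp
  then show ?case by simp
next
  case (Suc n M)
  then have "M \<noteq> {}" by auto
  have "Max (d ` M) \<in> d ` M" using Max_in[of "d ` M"] Suc.prems \<open>M \<noteq> {}\<close> by auto
  then obtain a where a: "a \<in> M" "d a = Max (d ` M)" by (metis imageE)
  have amax: "\<forall>b\<in>M. d b \<le> d a" using a Suc.prems by simp
  define M' where "M' = M - {a}"
  have cM': "n = card M'" using Suc.hyps(2) a Suc.prems by (simp add: M'_def)
  have eq: "{\<beta>\<in>M'. d \<beta> < d \<alpha>} = {\<beta>\<in>M. d \<beta> < d \<alpha>}" if "\<alpha> \<in> M'" for \<alpha>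
    using that amax by (auto simp: M'_def)
  have "\<forall>\<alpha>\<in>M'. d \<alpha> \<le> card {\<beta>\<in>M'. d \<beta> < d \<alpha>}"
    using Suc.prems(2) eq by (auto simp: M'_def)
  then obtain g where g: "inj_on g M'" "g ` M' \<subseteq> {1..n}" "\<forall>\<alpha>\<in>M'. d \<alpha> < g \<alpha>"
  proof -
    have "finite M'" using Suc.prems(1) by (simp add: M'_def)
    from Suc.hyps(1)[OF cM' this \<open>\<forall>\<alpha>\<in>M'. _\<close>] cM' show ?thesis using that by metis
  qed
  define g' where "g' = g(a := Suc n)"
  have "d a \<le> card {\<beta>\<in>M. d \<beta> < d a}" using Suc.prems a by auto
  also have "\<dots> \<le> card M'"
    by (rule card_mono) (use Suc.prems(1) in \<open>auto simp: M'_def\<close>)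
  finally have da: "d a < Suc n" using cM' by simp
  have Mi: "M = insert a M'" using a by (auto simp: M'_def)
  have "a \<notin> M'" by (simp add: M'_def)
  have i1: "inj_on g' M'"
    using g(1) \<open>a \<notin> M'\<close> inj_on_cong[of M' g' g] by (metis fun_upd_other g'_def)
  have i2: "g' a \<notin> g' ` M'"
  proof
    assume "g' a \<in> g' ` M'"
    then obtain b where "b \<in> M'" "g' a = g' b" by auto
    then have "Suc n = g b" using \<open>a \<notin> M'\<close> by (auto simp: g'_def split: if_splits)
    then show False using g(2) \<open>b \<in> M'\<close> by force
  qed
  have "inj_on g' M" unfolding Mi using i1 i2 \<open>a \<notin> M'\<close> by simp
  moreover have "g' ` M \<subseteq> {1..card M}"
    using g(2) \<open>a \<notin> M'\<close> Suc.hyps(2) unfolding Mi by (auto simp: g'_def)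
  moreover have "\<forall>\<alpha>\<in>M. d \<alpha> < g' \<alpha>"
    using g(3) da \<open>a \<notin> M'\<close> unfolding Mi by (auto simp: g'_def)
  ultimately show ?case by blast
qed

lemma finite_mono_set: "finite {\<alpha>::'m::finite \<Rightarrow> nat. (\<Sum>i\<in>UNIV. \<alpha> i) \<le> k}"
proof -
  have "{\<alpha>::'m \<Rightarrow> nat. (\<Sum>i\<in>UNIV. \<alpha> i) \<le> k} \<subseteq> Pi\<^sub>E UNIV (\<lambda>_. {..k})"
  proof
    fix \<alpha> :: "'m \<Rightarrow> nat" assume "\<alpha> \<in> {\<alpha>. (\<Sum>i\<in>UNIV. \<alpha> i) \<le> k}"
    then have "\<alpha> i \<le> k" for i
      using member_le_sum[of i UNIV \<alpha>] by auto
    then show "\<alpha> \<in> Pi\<^sub>E UNIV (\<lambda>_. {..k})" by (auto simp: PiE_UNIV_domain)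
  qed
  moreover have "finite (Pi\<^sub>E (UNIV::'m set) (\<lambda>_. {..k}))" by (rule finite_PiE) auto
  ultimately show ?thesis by (rule finite_subset)
qed

lemma card_deg_eq: "card {\<alpha>::'m::finite \<Rightarrow> nat. (\<Sum>i\<in>UNIV. \<alpha> i) = e} \<le> (CARD('m) + e - 1) choose e"
proof -
  obtain h where h: "bij_betw h {0..<CARD('m)} (UNIV::'m set)"
    using ex_bij_betw_nat_finite[of "UNIV::'m set"] by auto
  define F where "F = (\<lambda>\<alpha>::'m \<Rightarrow> nat. map (\<alpha> \<circ> h) [0..<CARD('m)])"
  have sF: "sum_list (F \<alpha>) = (\<Sum>i\<in>UNIV. \<alpha> i)" for \<alpha>
  proof -
    have "sum_list (F \<alpha>) = sum (\<alpha> \<circ> h) {0..<CARD('m)}"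
      by (simp add: F_def sum_list_distinct_conv_sum_set)
    also have "\<dots> = (\<Sum>i\<in>UNIV. \<alpha> i)" using sum.reindex_bij_betw[OF h, of \<alpha>] by simp
    finally show ?thesis .
  qed
  have inj: "inj F"
  proof
    fix \<alpha> \<beta> assume "F \<alpha> = F \<beta>"
    then have "\<forall>j<CARD('m). \<alpha> (h j) = \<beta> (h j)"
    proof (intro allI impI)
      fix j assume j: "j < CARD('m)"
      have "F \<alpha> ! j = \<alpha> (h j)" "F \<beta> ! j = \<beta> (h j)" by (simp_all add: F_def j)
      then show "\<alpha> (h j) = \<beta> (h j)" using \<open>F \<alpha> = F \<beta>\<close> by simp
    qed
    show "\<alpha> = \<beta>"
    proof
      fix i :: 'm
      have "i \<in> h ` {0..<CARD('m)}" using bij_betw_imp_surj_on[OF h] by simp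
      then obtain j where "j < CARD('m)" "i = h j" by auto
      then show "\<alpha> i = \<beta> i" using \<open>\<forall>j<CARD('m). \<alpha> (h j) = \<beta> (h j)\<close> by simp
    qed
  qed
  have "F ` {\<alpha>. (\<Sum>i\<in>UNIV. \<alpha> i) = e} \<subseteq> {l::nat list. size l = CARD('m) \<and> sum_list l = e}"
    using sF by (auto simp: F_def)
  have "card (F ` {\<alpha>. (\<Sum>i\<in>UNIV. \<alpha> i) = e}) \<le> card {l::nat list. size l = CARD('m) \<and> sum_list l = e}"
  proof (rule card_mono)
    have "{l::nat list. size l = CARD('m) \<and> sum_list l = e} \<subseteq> {l. set l \<subseteq> {..e} \<and> length l = CARD('m)}"
    proof
      fix l :: "nat list" assume "l \<in> {l::nat list. size l = CARD('m) \<and> sum_list l = e}"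
      then have "\<forall>y\<in>set l. y \<le> e" using member_le_sum_list by fastforce
      then show "l \<in> {l. set l \<subseteq> {..e} \<and> length l = CARD('m)}" using \<open>l \<in> _\<close> by auto
    qed
    moreover have "finite {l::nat list. set l \<subseteq> {..e} \<and> length l = CARD('m)}"
      by (rule finite_lists_length_eq) (rule finite_atMost)
    ultimately show "finite {l::nat list. size l = CARD('m) \<and> sum_list l = e}" by (rule finite_subset)
  qed (rule \<open>F ` _ \<subseteq> _\<close>)
  also have "\<dots> = (e + CARD('m) - 1) choose e" by (rule card_length_sum_list)
  finally show ?thesis using card_image[OF inj_on_subset[OF inj]] by (simp add: add.commute)
qed



abbreviation monom :: "('m::finite \<Rightarrow> nat) \<Rightarrow> real^'m \<Rightarrow> real" where
  "monom \<alpha> x \<equiv> (\<Prod>i\<in>UNIV. (x $ i) ^ \<alpha> i)"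

lemma card_M_le:
  "card {\<alpha>::'m::finite \<Rightarrow> nat. (\<Sum>i\<in>UNIV. \<alpha> i) \<le> k} \<le> (\<Sum>i=0..k. (CARD('m) + i - 1) choose i)"
proof -
  have "{\<alpha>::'m \<Rightarrow> nat. (\<Sum>i\<in>UNIV. \<alpha> i) \<le> k} = (\<Union>e\<in>{0..k}. {\<alpha>. (\<Sum>i\<in>UNIV. \<alpha> i) = e})" by auto
  then have "card {\<alpha>::'m \<Rightarrow> nat. (\<Sum>i\<in>UNIV. \<alpha> i) \<le> k} \<le> (\<Sum>e=0..k. card {\<alpha>::'m \<Rightarrow> nat. (\<Sum>i\<in>UNIV. \<alpha> i) = e})"
    using card_UN_le[of "{0..k}" "\<lambda>e. {\<alpha>::'m \<Rightarrow> nat. (\<Sum>i\<in>UNIV. \<alpha> i) = e}"] by simp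
  also have "\<dots> \<le> (\<Sum>i=0..k. (CARD('m) + i - 1) choose i)"
    by (rule sum_mono) (rule card_deg_eq)
  finally show ?thesis .
qed

lemma M_cond:
  fixes \<alpha> :: "'m::finite \<Rightarrow> nat"
  assumes "(\<Sum>i\<in>UNIV. \<alpha> i) \<le> k"
  shows "(\<Sum>i\<in>UNIV. \<alpha> i) \<le> card {\<beta>\<in>{\<alpha>::'m \<Rightarrow> nat. (\<Sum>i\<in>UNIV. \<alpha> i) \<le> k}. (\<Sum>i\<in>UNIV. \<beta> i) < (\<Sum>i\<in>UNIV. \<alpha> i)}"
proof -
  define e where "e = (\<Sum>i\<in>UNIV. \<alpha> i)"
  define b where "b = (\<lambda>t::nat. (\<lambda>i::'m. if i = undefined then t else 0))"
  have sb: "(\<Sum>i\<in>UNIV. b t i) = t" for t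
    unfolding b_def by (simp add: sum.delta)
  have inj: "inj b"
  proof
    fix s t assume "b s = b t"
    then have "b s undefined = b t undefined" by simp
    then show "s = t" by (simp add: b_def)
  qed
  have sub: "b ` {..<e} \<subseteq> {\<beta>\<in>{\<alpha>::'m \<Rightarrow> nat. (\<Sum>i\<in>UNIV. \<alpha> i) \<le> k}. (\<Sum>i\<in>UNIV. \<beta> i) < e}"
    using sb assms e_def by auto
  have "card (b ` {..<e}) \<le> card {\<beta>\<in>{\<alpha>::'m \<Rightarrow> nat. (\<Sum>i\<in>UNIV. \<alpha> i) \<le> k}. (\<Sum>i\<in>UNIV. \<beta> i) < e}"
    by (rule card_mono[OF _ sub]) (rule finite_subset[OF _ finite_mono_set[of k]], auto)
  moreover have "card (b ` {..<e}) = e" using card_image[OF inj_on_subset[OF inj]] by simp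
  ultimately show ?thesis by (simp add: e_def)
qed

lemma represent:
  fixes q :: "real^'m \<Rightarrow> real"
  assumes "poly_total_deg_le k q"
  shows "\<exists>u. \<forall>x. q x = ridge_prod_poly (\<Sum>i=0..k. (CARD('m) + i - 1) choose i) u x"
proof -
  define N where "N = (\<Sum>i=0..k. (CARD('m) + i - 1) choose i)"
  define M where "M = {\<alpha>::'m \<Rightarrow> nat. (\<Sum>i\<in>UNIV. \<alpha> i) \<le> k}"
  obtain c where c: "\<forall>x. q x = (\<Sum>\<alpha>\<in>M. c \<alpha> * monom \<alpha> x)"
    using assms unfolding poly_total_deg_le_def M_def by blast
  have fM: "finite M" unfolding M_def by (rule finite_mono_set)
  obtain g where g: "inj_on g M" "g ` M \<subseteq> {1..card M}" "\<forall>\<alpha>\<in>M. (\<Sum>i\<in>UNIV. \<alpha> i) < g \<alpha>"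
    using assign[OF fM, of "\<lambda>\<alpha>. \<Sum>i\<in>UNIV. \<alpha> i"] M_cond unfolding M_def by blast
  have gN: "g ` M \<subseteq> {1..N}" using g(2) card_M_le[of k, where 'm='m] unfolding N_def M_def by fastforce
  define G where "G = (\<lambda>i. if i \<in> g ` M then (\<lambda>x. c (inv_into M g i) * monom (inv_into M g i) x) else (\<lambda>x. 0))"
  have "\<forall>i\<in>{1..N}. prodform i (G i)"
  proof
    fix i assume i: "i \<in> {1..N}"
    show "prodform i (G i)"
    proof (cases "i \<in> g ` M")
      case True
      define \<alpha> where "\<alpha> = inv_into M g i"
      have aM: "\<alpha> \<in> M" "g \<alpha> = i" using True by (auto simp: \<alpha>_def inv_into_into f_inv_into_f)
      have "prodform (Suc (\<Sum>i\<in>UNIV. \<alpha> i)) (\<lambda>x. c \<alpha> * monom \<alpha> x)" by (rule prodform_monomial)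
      then have "prodform i (\<lambda>x. c \<alpha> * monom \<alpha> x)"
        by (rule prodform_lift) (use g(3) aM in force)
      then show ?thesis using True by (simp add: G_def \<alpha>_def)
    next
      case False
      then have "G i = (\<lambda>x. 0)" by (simp add: G_def)
      moreover have "i = Suc (i - 1)" using i by simp
      ultimately show ?thesis using prodform_zero[of "i - 1"] by metis
    qed
  qed
  then have "\<forall>i\<in>{1..N}. \<exists>v. \<forall>x. G i x = (\<Prod>j=1..i. xcheck x \<bullet> v j)" unfolding prodform_def by blast
  then obtain V where V: "\<forall>i\<in>{1..N}. \<forall>x. G i x = (\<Prod>j=1..i. xcheck x \<bullet> V i j)" by metis
  have "q x = ridge_prod_poly N V x" for x
  proof -
    have "ridge_prod_poly N V x = (\<Sum>i=1..N. G i x)"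
      unfolding ridge_prod_poly_def using V by simp
    also have "\<dots> = (\<Sum>i\<in>g ` M. G i x)"
      by (rule sum.mono_neutral_right) (use gN in \<open>auto simp: G_def\<close>)
    also have "\<dots> = (\<Sum>\<alpha>\<in>M. G (g \<alpha>) x)" using sum.reindex[OF g(1), of "\<lambda>i. G i x"] by simp
    also have "\<dots> = (\<Sum>\<alpha>\<in>M. c \<alpha> * monom \<alpha> x)"
      by (rule sum.cong) (use g(1) in \<open>auto simp: G_def inv_into_f_f\<close>)
    finally show ?thesis using c by simp
  qed
  then show ?thesis unfolding N_def by blast
qed



abbreviation PP :: "nat \<Rightarrow> (real^'m::finite \<Rightarrow> real) \<Rightarrow> bool" where
  "PP \<equiv> poly_total_deg_le"

lemma P_mono:
  fixes p :: "real^'m \<Rightarrow> real"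
  assumes "PP a p" "a \<le> b" shows "PP b p"
proof -
  obtain c where c: "\<forall>x. p x = (\<Sum>\<alpha>\<in>{\<alpha>. (\<Sum>i\<in>UNIV. \<alpha> i) \<le> a}. c \<alpha> * monom \<alpha> x)"
    using assms(1) unfolding poly_total_deg_le_def by blast
  define c' where "c' = (\<lambda>\<alpha>. if (\<Sum>i\<in>UNIV. \<alpha> i) \<le> a then c \<alpha> else 0)"
  have "p x = (\<Sum>\<alpha>\<in>{\<alpha>. (\<Sum>i\<in>UNIV. \<alpha> i) \<le> b}. c' \<alpha> * monom \<alpha> x)" for x
  proof -
    have "(\<Sum>\<alpha>\<in>{\<alpha>. (\<Sum>i\<in>UNIV. \<alpha> i) \<le> b}. c' \<alpha> * monom \<alpha> x)
        = (\<Sum>\<alpha>\<in>{\<alpha>::'m\<Rightarrow>nat. (\<Sum>i\<in>UNIV. \<alpha> i) \<le> a}. c' \<alpha> * monom \<alpha> x)"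
      by (rule sum.mono_neutral_right) (use assms(2) finite_mono_set in \<open>auto simp: c'_def\<close>)
    also have "\<dots> = (\<Sum>\<alpha>\<in>{\<alpha>. (\<Sum>i\<in>UNIV. \<alpha> i) \<le> a}. c \<alpha> * monom \<alpha> x)"
      by (rule sum.cong) (auto simp: c'_def)
    finally show ?thesis using c by simp
  qed
  then show ?thesis unfolding poly_total_deg_le_def by blast
qed

lemma P_add:
  fixes p q :: "real^'m \<Rightarrow> real"
  assumes "PP k p" "PP k q" shows "PP k (\<lambda>x. p x + q x)"
proof -
  obtain c where c: "\<forall>x. p x = (\<Sum>\<alpha>\<in>{\<alpha>. (\<Sum>i\<in>UNIV. \<alpha> i) \<le> k}. c \<alpha> * monom \<alpha> x)"
    using assms(1) unfolding poly_total_deg_le_def by blast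
  obtain d where d: "\<forall>x. q x = (\<Sum>\<alpha>\<in>{\<alpha>. (\<Sum>i\<in>UNIV. \<alpha> i) \<le> k}. d \<alpha> * monom \<alpha> x)"
    using assms(2) unfolding poly_total_deg_le_def by blast
  have e: "p x + q x = (\<Sum>\<alpha>\<in>{\<alpha>. (\<Sum>i\<in>UNIV. \<alpha> i) \<le> k}. (c \<alpha> + d \<alpha>) * monom \<alpha> x)" for x
    using c d by (simp add: sum.distrib distrib_right)
  show ?thesis unfolding poly_total_deg_le_def by (rule exI[of _ "\<lambda>\<alpha>. c \<alpha> + d \<alpha>"]) (simp add: e)
qed

lemma P_scale:
  fixes p :: "real^'m \<Rightarrow> real"
  assumes "PP k p" shows "PP k (\<lambda>x. r * p x)"
proof -
  obtain c where c: "\<forall>x. p x = (\<Sum>\<alpha>\<in>{\<alpha>. (\<Sum>i\<in>UNIV. \<alpha> i) \<le> k}. c \<alpha> * monom \<alpha> x)"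
    using assms(1) unfolding poly_total_deg_le_def by blast
  have e: "r * p x = (\<Sum>\<alpha>\<in>{\<alpha>. (\<Sum>i\<in>UNIV. \<alpha> i) \<le> k}. (r * c \<alpha>) * monom \<alpha> x)" for x
    using c by (simp add: sum_distrib_left mult.assoc)
  show ?thesis unfolding poly_total_deg_le_def by (rule exI[of _ "\<lambda>\<alpha>. r * c \<alpha>"]) (simp add: e)
qed

lemma P_zero: "PP k (\<lambda>x. 0)"
  unfolding poly_total_deg_le_def by (rule exI[of _ "\<lambda>_. 0"]) simp

lemma P_monomial:
  fixes \<beta> :: "'m::finite \<Rightarrow> nat"
  assumes "(\<Sum>i\<in>UNIV. \<beta> i) \<le> k" shows "PP k (\<lambda>x::real^'m. monom \<beta> x)"
proof -
  have e: "monom \<beta> x = (\<Sum>\<alpha>\<in>{\<alpha>. (\<Sum>i\<in>UNIV. \<alpha> i) \<le> k}. (if \<alpha> = \<beta> then 1 else 0) * monom \<alpha> x)" for x :: "real^'m"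
  proof -
    have "(\<Sum>\<alpha>\<in>{\<alpha>. (\<Sum>i\<in>UNIV. \<alpha> i) \<le> k}. (if \<alpha> = \<beta> then 1 else 0) * monom \<alpha> x)
        = (\<Sum>\<alpha>\<in>{\<alpha>::'m\<Rightarrow>nat. (\<Sum>i\<in>UNIV. \<alpha> i) \<le> k}. if \<alpha> = \<beta> then monom \<alpha> x else 0)"
      by (rule sum.cong) auto
    also have "\<dots> = monom \<beta> x" using assms by (simp add: sum.delta[OF finite_mono_set])
    finally show ?thesis by simp
  qed
  show ?thesis unfolding poly_total_deg_le_def by (rule exI[of _ "\<lambda>\<alpha>. if \<alpha> = \<beta> then 1 else 0"]) (simp only: e[symmetric], simp)
qed

lemma P_sum:
  fixes F :: "'s \<Rightarrow> real^'m \<Rightarrow> real"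
  assumes "finite S" "\<forall>s\<in>S. PP k (F s)" shows "PP k (\<lambda>x. \<Sum>s\<in>S. F s x)"
  using assms
proof (induction S rule: finite_induct)
  case empty then show ?case using P_zero by simp
next
  case (insert a S)
  then show ?case using P_add[of k "F a" "\<lambda>x. \<Sum>s\<in>S. F s x"] by simp
qed

lemma P_mult:
  fixes p q :: "real^'m \<Rightarrow> real"
  assumes "PP a p" "PP b q" shows "PP (a + b) (\<lambda>x. p x * q x)"
proof -
  obtain c where c: "\<forall>x. p x = (\<Sum>\<alpha>\<in>{\<alpha>. (\<Sum>i\<in>UNIV. \<alpha> i) \<le> a}. c \<alpha> * monom \<alpha> x)"
    using assms(1) unfolding poly_total_deg_le_def by blast
  obtain d where d: "\<forall>x. q x = (\<Sum>\<alpha>\<in>{\<alpha>. (\<Sum>i\<in>UNIV. \<alpha> i) \<le> b}. d \<alpha> * monom \<alpha> x)"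
    using assms(2) unfolding poly_total_deg_le_def by blast
  have mm: "monom \<alpha> x * monom \<beta> x = monom (\<lambda>i. \<alpha> i + \<beta> i) x" for \<alpha> \<beta> and x :: "real^'m"
    by (simp add: power_add prod.distrib)
  have eq: "p x * q x = (\<Sum>\<alpha>\<in>{\<alpha>. (\<Sum>i\<in>UNIV. \<alpha> i) \<le> a}. \<Sum>\<beta>\<in>{\<alpha>. (\<Sum>i\<in>UNIV. \<alpha> i) \<le> b}.
                 (c \<alpha> * d \<beta>) * monom (\<lambda>i. \<alpha> i + \<beta> i) x)" for x
    using c d by (simp add: sum_product mm[symmetric] mult_ac)
  have "PP (a + b) (\<lambda>x. \<Sum>\<alpha>\<in>{\<alpha>. (\<Sum>i\<in>UNIV. \<alpha> i) \<le> a}. \<Sum>\<beta>\<in>{\<alpha>. (\<Sum>i\<in>UNIV. \<alpha> i) \<le> b}.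
                 (c \<alpha> * d \<beta>) * monom (\<lambda>i. \<alpha> i + \<beta> i) x)"
  proof (intro P_sum[OF finite_mono_set] ballI P_sum[OF finite_mono_set] P_scale P_monomial)
    fix \<alpha> \<beta> :: "'m \<Rightarrow> nat"
    assume "\<alpha> \<in> {\<alpha>. (\<Sum>i\<in>UNIV. \<alpha> i) \<le> a}" "\<beta> \<in> {\<alpha>. (\<Sum>i\<in>UNIV. \<alpha> i) \<le> b}"
    then show "(\<Sum>i\<in>UNIV. \<alpha> i + \<beta> i) \<le> a + b" by (simp add: sum.distrib)
  qed
  then show ?thesis using eq by simp
qed

lemma P_linear:
  fixes f :: "real^'m \<Rightarrow> real"
  assumes "bounded_linear f" shows "PP 1 f"
proof -
  interpret linear f using assms bounded_linear.linear by blast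
  have fx: "f x = (\<Sum>i\<in>UNIV. f (axis i 1) * monom (\<lambda>j. if j = i then 1 else 0) x)" for x
  proof -
    have "f x = f (\<Sum>i\<in>UNIV. (x$i) *s axis i 1)" by (simp add: basis_expansion)
    also have "\<dots> = (\<Sum>i\<in>UNIV. x$i * f (axis i 1))"
      by (simp add: sum scalar_mult_eq_scaleR scale)
    also have "\<dots> = (\<Sum>i\<in>UNIV. f (axis i 1) * monom (\<lambda>j. if j = i then 1 else 0) x)"
    proof (rule sum.cong)
      fix i assume "i \<in> (UNIV::'m set)"
      have "monom (\<lambda>j. if j = i then 1 else 0) x = x $ i"
        by (simp add: if_distrib prod.delta cong: if_cong)
      then show "x$i * f (axis i 1) = f (axis i 1) * monom (\<lambda>j. if j = i then 1 else 0) x" by simp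
    qed simp
    finally show ?thesis .
  qed
  have "PP 1 (\<lambda>x. \<Sum>i\<in>UNIV. f (axis i 1) * monom (\<lambda>j. if j = i then 1 else 0) x)"
    by (intro P_sum ballI P_scale P_monomial) (auto simp: sum.delta)
  moreover have "(\<lambda>x. \<Sum>i\<in>UNIV. f (axis i 1) * monom (\<lambda>j. if j = i then 1 else 0) x) = f"
    by (rule ext, rule fx[symmetric])
  ultimately show ?thesis by simp
qed

lemma P_const: "PP 0 (\<lambda>x::real^'m::finite. r)"
proof -
  have "PP 0 (\<lambda>x::real^'m. monom (\<lambda>_. 0) x)" by (rule P_monomial) simp
  from P_scale[OF this, of r] show ?thesis by simp
qed

lemma poly_fun_P:
  fixes p :: "real^'m \<Rightarrow> real"
  assumes "real_polynomial_function p" shows "\<exists>k. PP k p"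
  using assms
proof (induction rule: real_polynomial_function.induct)
  case (linear f) then show ?case using P_linear by blast
next
  case (const c) then show ?case using P_const by blast
next
  case (add f g)
  then obtain a b where "PP a f" "PP b g" by blast
  then have "PP (max a b) f" "PP (max a b) g" by (auto intro: P_mono)
  then show ?case using P_add by blast
next
  case (mult f g)
  then obtain a b where "PP a f" "PP b g" by blast
  then show ?case using P_mult by blast
qed

theorem mainTheorem2:
  fixes C :: "(real^'m) set" and f :: "real^'m \<Rightarrow> real" and \<epsilon> :: real
  assumes "compact C" and "continuous_on C f" and "\<epsilon> > 0"
  shows "(\<exists>N::nat. N > 0 \<and> (\<exists>u. \<forall>x\<in>C. \<bar>f x - ridge_prod_poly N u x\<bar> < \<epsilon>))
       \<and> (\<forall>(k::nat) (q :: real^'m \<Rightarrow> real).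
            poly_total_deg_le k q \<and> (\<forall>x\<in>C. \<bar>f x - q x\<bar> < \<epsilon>) \<longrightarrow>
            (\<exists>u. \<forall>x\<in>C. \<bar>f x - ridge_prod_poly (\<Sum>i=0..k. (CARD('m) + i - 1) choose i) u x\<bar> < \<epsilon>))"
proof
  show part2: "\<forall>(k::nat) (q :: real^'m \<Rightarrow> real).
            poly_total_deg_le k q \<and> (\<forall>x\<in>C. \<bar>f x - q x\<bar> < \<epsilon>) \<longrightarrow>
            (\<exists>u. \<forall>x\<in>C. \<bar>f x - ridge_prod_poly (\<Sum>i=0..k. (CARD('m) + i - 1) choose i) u x\<bar> < \<epsilon>)"
  proof (intro allI impI)
    fix k and q :: "real^'m \<Rightarrow> real"
    assume h: "poly_total_deg_le k q \<and> (\<forall>x\<in>C. \<bar>f x - q x\<bar> < \<epsilon>)"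
    then obtain u where "\<forall>x. q x = ridge_prod_poly (\<Sum>i=0..k. (CARD('m) + i - 1) choose i) u x"
      using represent by blast
    then show "\<exists>u. \<forall>x\<in>C. \<bar>f x - ridge_prod_poly (\<Sum>i=0..k. (CARD('m) + i - 1) choose i) u x\<bar> < \<epsilon>"
      using h by metis
  qed
  obtain g where g: "polynomial_function g" "\<forall>x\<in>C. norm (f x - g x) < \<epsilon>"
    using Stone_Weierstrass_polynomial_function[OF assms] by blast
  obtain k where k: "PP k g" using poly_fun_P g(1) real_polynomial_function_eq by blast
  have pos: "(\<Sum>i=0..k. (CARD('m) + i - 1) choose i) > 0"
  proof -
    have "(CARD('m) + 0 - 1) choose 0 \<le> (\<Sum>i=0..k. (CARD('m) + i - 1) choose i)"
      by (rule member_le_sum) auto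
    then show ?thesis by simp
  qed
  show "\<exists>N::nat. N > 0 \<and> (\<exists>u. \<forall>x\<in>C. \<bar>f x - ridge_prod_poly N u x\<bar> < \<epsilon>)"
  proof -
    have "\<forall>x\<in>C. \<bar>f x - g x\<bar> < \<epsilon>" using g(2) by simp
    then obtain u where "\<forall>x\<in>C. \<bar>f x - ridge_prod_poly (\<Sum>i=0..k. (CARD('m) + i - 1) choose i) u x\<bar> < \<epsilon>"
      using part2 k by blast
    then show ?thesis using pos by blast
  qed
qed


end
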